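(* Let $n\in\{5,6,7,8,9,11\}$ and let $G_n$ be the regular network graph with cells $\{1,\dots,n\}$ (indices modulo $n$) in which each cell $i$ receives edges from its nearest and next nearest neighbours, i.e. the edges are $(i\pm1,i)$ and $(i\pm 2,i)$ for all $i$, all of a single edge type. Then $G_n$ has no exotic pattern of synchrony: for every balanced equivalence relation $\bowtie$ on the cells of $G_n$ there exists a subgroup $\Sigma$ of $\mathrm{Aut}(G_n)$ with $\bowtie\;=\;\bowtie_\Sigma$.
   Context: For a network graph with cells $\mathcal{C}$, edges $\mathcal{E}\subset\mathcal{C}\times\mathcal{C}$, and a single edge type (and single cell type), the input set of a cell $c$ is $I(c)=\{(d,c)\in\mathcal{E}\}$ and $\mathcal{T}(e)$ denotes the tail $d$ of an edge $e=(d,c)$. An equivalence relation $\bowtie$ on $\mathcal{C}$ is balanced if whenever $c\bowtie d$ there exists a bijection $\beta:I(c)\to I(d)$ with $\mathcal{T}(e)\bowtie\mathcal{T}(\beta(e))$ for all $e\in I(c)$. An automorphism of the graph is a permutation $\gamma$ of $\mathcal{C}$ with $(c,d)\in\mathcal{E}$ iff $(\gamma(c),\gamma(d))\in\mathcal{E}$; these form the group $\mathrm{Aut}$. For a subgroup $\Sigma$ of $\mathrm{Aut}$, $\bowtie_\Sigma$ is the orbit relation: $c\bowtie_\Sigma d$ iff $\gamma(c)=d$ for some $\gamma\in\Sigma$. A balanced equivalence relation is exotic if it is not of the form $\bowtie_\Sigma$ for any subgroup $\Sigma$ of $\mathrm{Aut}$. *)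

theory Defs
  imports Main "HOL-Combinatorics.Permutations"
begin

text \<open>General network graphs with a single cell type and a single edge type:
  cells C, edges E a subset of C x C (edge (d,c) goes from tail d to head c).\<close>

definition input_set :: "('a \<times> 'a) set \<Rightarrow> 'a \<Rightarrow> ('a \<times> 'a) set" where
  "input_set E c = {e \<in> E. snd e = c}"

definition tail :: "'a \<times> 'a \<Rightarrow> 'a" where
  "tail e = fst e"

definition balanced :: "'a set \<Rightarrow> ('a \<times> 'a) set \<Rightarrow> ('a \<times> 'a) set \<Rightarrow> bool" where
  "balanced C E R \<longleftrightarrow> equiv C R \<and>
     (\<forall>c d. (c, d) \<in> R \<longrightarrow>
        (\<exists>\<beta>. bij_betw \<beta> (input_set E c) (input_set E d) \<and>
              (\<forall>e \<in> input_set E c. (tail e, tail (\<beta> e)) \<in> R)))"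

definition automorphisms :: "'a set \<Rightarrow> ('a \<times> 'a) set \<Rightarrow> ('a \<Rightarrow> 'a) set" where
  "automorphisms C E = {\<gamma>. \<gamma> permutes C \<and>
     (\<forall>c \<in> C. \<forall>d \<in> C. (c, d) \<in> E \<longleftrightarrow> (\<gamma> c, \<gamma> d) \<in> E)}"

definition is_subgroup_Aut :: "'a set \<Rightarrow> ('a \<times> 'a) set \<Rightarrow> ('a \<Rightarrow> 'a) set \<Rightarrow> bool" where
  "is_subgroup_Aut C E \<Sigma> \<longleftrightarrow> \<Sigma> \<subseteq> automorphisms C E \<and> id \<in> \<Sigma> \<and>
     (\<forall>\<gamma> \<in> \<Sigma>. \<forall>\<delta> \<in> \<Sigma>. \<gamma> \<circ> \<delta> \<in> \<Sigma>) \<and> (\<forall>\<gamma> \<in> \<Sigma>. inv \<gamma> \<in> \<Sigma>)"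

definition orbit_rel :: "'a set \<Rightarrow> ('a \<Rightarrow> 'a) set \<Rightarrow> ('a \<times> 'a) set" where
  "orbit_rel C \<Sigma> = {(c, d). c \<in> C \<and> (\<exists>\<gamma> \<in> \<Sigma>. \<gamma> c = d)}"

definition exotic :: "'a set \<Rightarrow> ('a \<times> 'a) set \<Rightarrow> ('a \<times> 'a) set \<Rightarrow> bool" where
  "exotic C E R \<longleftrightarrow> balanced C E R \<and>
     \<not> (\<exists>\<Sigma>. is_subgroup_Aut C E \<Sigma> \<and> R = orbit_rel C \<Sigma>)"

definition ring_cells :: "nat \<Rightarrow> nat set" where
  "ring_cells n = {0..<n}"

definition ring_edges :: "nat \<Rightarrow> (nat \<times> nat) set" where
  "ring_edges n = (\<Union>i \<in> {0..<n}.
     {((i + 1) mod n, i), ((i + n - 1) mod n, i), ((i + 2) mod n, i), ((i + n - 2) mod n, i)})"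

end

theory Submission
  imports Defs "HOL-Library.Multiset"
begin


fun subl :: "nat list \<Rightarrow> nat list \<Rightarrow> bool" where
  "subl [] ys = True"
| "subl (x # xs) ys = (x \<in> set ys \<and> subl xs (remove1 x ys))"

fun lkp :: "nat \<Rightarrow> (nat \<times> nat list) list \<Rightarrow> nat list option" where
  "lkp c [] = None"
| "lkp c ((d, s) # r) = (if c = d then Some s else lkp c r)"

definition okp :: "nat \<Rightarrow> nat list \<Rightarrow> (nat \<times> nat list) list \<Rightarrow> bool" where
  "okp c t cs = (case lkp c cs of None \<Rightarrow> True | Some s \<Rightarrow> subl t s)"

definition addc :: "nat \<Rightarrow> nat list \<Rightarrow> (nat \<times> nat list) list \<Rightarrow> (nat \<times> nat list) list option" where
  "addc c t cs = (case lkp c cs of None \<Rightarrow> Some ((c, t) # cs) | Some s \<Rightarrow> if subl t s then Some cs else None)"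

fun upd :: "nat list \<Rightarrow> (nat \<times> nat list) list \<Rightarrow> (nat \<times> nat list) list option" where
  "upd (a # b # c # d # e # r) cs = addc c [b, d, a, e] cs"
| "upd _ cs = Some cs"

fun pchk :: "nat list \<Rightarrow> (nat \<times> nat list) list \<Rightarrow> nat list \<Rightarrow> bool" where
  "pchk (a # b # c # d # r) cs h = (okp a [b, c] cs \<and> okp b [a, c, d] cs \<and>
     (case h of [x0, x1, x2, x3] \<Rightarrow> okp x0 [x1, x2] cs \<and> okp x1 [x0, x2, x3] cs | _ \<Rightarrow> True))"
| "pchk _ cs h = True"

fun final :: "nat list \<Rightarrow> (nat \<times> nat list) list \<Rightarrow> nat list \<Rightarrow> nat list list" where
  "final (y0 # y1 # y2 # y3 # r) cs [x0, x1, x2, x3] =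
    (case addc y1 [y0, y2, x0, y3] cs of None \<Rightarrow> [] | Some cs1 \<Rightarrow>
     (case addc y0 [x0, y1, x1, y2] cs1 of None \<Rightarrow> [] | Some cs2 \<Rightarrow>
     (case addc x0 [x1, y0, x2, y1] cs2 of None \<Rightarrow> [] | Some cs3 \<Rightarrow>
     (case addc x1 [x2, x0, x3, y0] cs3 of None \<Rightarrow> [] | Some cs4 \<Rightarrow> [rev (y0 # y1 # y2 # y3 # r)]))))"
| "final _ cs h = []"

function search :: "nat \<Rightarrow> nat list \<Rightarrow> nat \<Rightarrow> nat list \<Rightarrow> (nat \<times> nat list) list \<Rightarrow> nat list \<Rightarrow> nat list list"
  and branch :: "nat \<Rightarrow> nat list \<Rightarrow> nat \<Rightarrow> nat list \<Rightarrow> (nat \<times> nat list) list \<Rightarrow> nat list \<Rightarrow> nat list \<Rightarrow> nat list list"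
  and step :: "nat \<Rightarrow> nat list \<Rightarrow> nat \<Rightarrow> nat list \<Rightarrow> (nat \<times> nat list) list option \<Rightarrow> nat list \<Rightarrow> nat list list" where
  "search n reps k ys cs h = (if n \<le> k then final ys cs h else branch n reps k ys cs h (reps @ [k]))"
| "branch n reps k ys cs h [] = []"
| "branch n reps k ys cs h (v # vs) =
     (if n \<le> k then [] else
      step n (if v = k then reps @ [v] else reps) (Suc k) (v # ys) (upd (v # ys) cs) (if k = 3 then rev (v # ys) else h)
      @ branch n reps k ys cs h vs)"
| "step n reps k ys None h = []"
| "step n reps k ys (Some cs) h = (if pchk ys cs h then search n reps k ys cs h else [])"
  by pat_completeness auto
termination
  by (relation "measures [\<lambda>x. case x of Inl (n, reps, k, ys, cs, h) \<Rightarrow> n - k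
                                   | Inr (Inl (n, reps, k, ys, cs, h, vs)) \<Rightarrow> n - k
                                   | Inr (Inr (n, reps, k, ys, cs, h)) \<Rightarrow> n - k,
                          \<lambda>x. case x of Inl _ \<Rightarrow> 2 | Inr (Inl _) \<Rightarrow> 1 | Inr (Inr _) \<Rightarrow> 3,
                          \<lambda>x. case x of Inr (Inl (n, reps, k, ys, cs, h, vs)) \<Rightarrow> length vs | _ \<Rightarrow> 0]") auto

definition nbrs :: "nat \<Rightarrow> nat \<Rightarrow> nat list" where
  "nbrs n i = [(i + 1) mod n, (i + n - 1) mod n, (i + 2) mod n, (i + n - 2) mod n]"

definition isaut :: "nat \<Rightarrow> nat list \<Rightarrow> bool" where
  "isaut n g = (length g = n \<and> distinct g \<and> list_all (\<lambda>x. x < n) g \<and>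
     list_all (\<lambda>b. list_all (\<lambda>a. g ! a \<in> set (nbrs n (g ! b))) (nbrs n b)) [0..<n])"

definition good :: "nat \<Rightarrow> nat list list \<Rightarrow> nat list \<Rightarrow> bool" where
  "good n A xs = list_all (\<lambda>j. list_ex (\<lambda>g. g ! (xs ! j) = j \<and> list_all (\<lambda>k. xs ! (g ! k) = xs ! k) [0..<n]) A) [0..<n]"

definition auts5 :: "nat list list" where
  "auts5 = [[0, 1, 2, 3, 4], [1, 0, 2, 3, 4], [2, 1, 0, 3, 4], [3, 1, 2, 0, 4], [4, 1, 2, 3, 0], [0, 2, 1, 3, 4], [0, 3, 2, 1, 4], [0, 4, 2, 3, 1], [0, 1, 3, 2, 4], [0, 1, 4, 3, 2], [0, 1, 2, 4, 3]]"

definition auts6 :: "nat list list" where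
  "auts6 = [[0, 1, 2, 3, 4, 5], [3, 1, 2, 0, 4, 5], [4, 3, 2, 1, 0, 5], [1, 0, 2, 4, 3, 5], [2, 1, 0, 5, 4, 3], [5, 1, 3, 2, 4, 0], [0, 4, 2, 3, 1, 5], [0, 5, 4, 3, 2, 1], [0, 1, 5, 3, 4, 2], [0, 2, 1, 3, 5, 4]]"

definition auts7 :: "nat list list" where
  "auts7 = [[0, 1, 2, 3, 4, 5, 6], [1, 2, 3, 4, 5, 6, 0], [2, 3, 4, 5, 6, 0, 1], [3, 4, 5, 6, 0, 1, 2], [4, 5, 6, 0, 1, 2, 3], [5, 6, 0, 1, 2, 3, 4], [6, 0, 1, 2, 3, 4, 5], [0, 6, 5, 4, 3, 2, 1], [1, 0, 6, 5, 4, 3, 2], [2, 1, 0, 6, 5, 4, 3], [3, 2, 1, 0, 6, 5, 4], [4, 3, 2, 1, 0, 6, 5], [5, 4, 3, 2, 1, 0, 6], [6, 5, 4, 3, 2, 1, 0]]"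

definition auts8 :: "nat list list" where
  "auts8 = [[0, 1, 2, 3, 4, 5, 6, 7], [1, 2, 3, 4, 5, 6, 7, 0], [2, 3, 4, 5, 6, 7, 0, 1], [3, 4, 5, 6, 7, 0, 1, 2], [4, 5, 6, 7, 0, 1, 2, 3], [5, 6, 7, 0, 1, 2, 3, 4], [6, 7, 0, 1, 2, 3, 4, 5], [7, 0, 1, 2, 3, 4, 5, 6], [0, 7, 6, 5, 4, 3, 2, 1], [1, 0, 7, 6, 5, 4, 3, 2], [2, 1, 0, 7, 6, 5, 4, 3], [3, 2, 1, 0, 7, 6, 5, 4], [4, 3, 2, 1, 0, 7, 6, 5], [5, 4, 3, 2, 1, 0, 7, 6], [6, 5, 4, 3, 2, 1, 0, 7], [7, 6, 5, 4, 3, 2, 1, 0]]"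

definition auts9 :: "nat list list" where
  "auts9 = [[0, 1, 2, 3, 4, 5, 6, 7, 8], [1, 2, 3, 4, 5, 6, 7, 8, 0], [2, 3, 4, 5, 6, 7, 8, 0, 1], [3, 4, 5, 6, 7, 8, 0, 1, 2], [4, 5, 6, 7, 8, 0, 1, 2, 3], [5, 6, 7, 8, 0, 1, 2, 3, 4], [6, 7, 8, 0, 1, 2, 3, 4, 5], [7, 8, 0, 1, 2, 3, 4, 5, 6], [8, 0, 1, 2, 3, 4, 5, 6, 7], [0, 8, 7, 6, 5, 4, 3, 2, 1], [1, 0, 8, 7, 6, 5, 4, 3, 2], [2, 1, 0, 8, 7, 6, 5, 4, 3], [3, 2, 1, 0, 8, 7, 6, 5, 4], [4, 3, 2, 1, 0, 8, 7, 6, 5], [5, 4, 3, 2, 1, 0, 8, 7, 6], [6, 5, 4, 3, 2, 1, 0, 8, 7], [7, 6, 5, 4, 3, 2, 1, 0, 8], [8, 7, 6, 5, 4, 3, 2, 1, 0]]"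

definition auts11 :: "nat list list" where
  "auts11 = [[0, 1, 2, 3, 4, 5, 6, 7, 8, 9, 10], [1, 2, 3, 4, 5, 6, 7, 8, 9, 10, 0], [2, 3, 4, 5, 6, 7, 8, 9, 10, 0, 1], [3, 4, 5, 6, 7, 8, 9, 10, 0, 1, 2], [4, 5, 6, 7, 8, 9, 10, 0, 1, 2, 3], [5, 6, 7, 8, 9, 10, 0, 1, 2, 3, 4], [6, 7, 8, 9, 10, 0, 1, 2, 3, 4, 5], [7, 8, 9, 10, 0, 1, 2, 3, 4, 5, 6], [8, 9, 10, 0, 1, 2, 3, 4, 5, 6, 7], [9, 10, 0, 1, 2, 3, 4, 5, 6, 7, 8], [10, 0, 1, 2, 3, 4, 5, 6, 7, 8, 9], [0, 10, 9, 8, 7, 6, 5, 4, 3, 2, 1], [1, 0, 10, 9, 8, 7, 6, 5, 4, 3, 2], [2, 1, 0, 10, 9, 8, 7, 6, 5, 4, 3], [3, 2, 1, 0, 10, 9, 8, 7, 6, 5, 4], [4, 3, 2, 1, 0, 10, 9, 8, 7, 6, 5], [5, 4, 3, 2, 1, 0, 10, 9, 8, 7, 6], [6, 5, 4, 3, 2, 1, 0, 10, 9, 8, 7], [7, 6, 5, 4, 3, 2, 1, 0, 10, 9, 8], [8, 7, 6, 5, 4, 3, 2, 1, 0, 10, 9], [9, 8, 7, 6, 5, 4, 3, 2, 1, 0, 10], [10, 9, 8, 7, 6, 5, 4, 3, 2, 1, 0]]"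

lemma c1_5: "list_all (\<lambda>b. distinct (nbrs 5 b)) [0..<5]"
  by code_simp

lemma c2_5: "list_all (isaut 5) auts5"
  unfolding auts5_def by code_simp

lemma c3_5: "list_all (good 5 auts5) (search 5 [] 0 [] [] [])"
  unfolding auts5_def by code_simp

lemma c1_6: "list_all (\<lambda>b. distinct (nbrs 6 b)) [0..<6]"
  by code_simp

lemma c2_6: "list_all (isaut 6) auts6"
  unfolding auts6_def by code_simp

lemma c3_6: "list_all (good 6 auts6) (search 6 [] 0 [] [] [])"
  unfolding auts6_def by code_simp

lemma c1_7: "list_all (\<lambda>b. distinct (nbrs 7 b)) [0..<7]"
  by code_simp

lemma c2_7: "list_all (isaut 7) auts7"
  unfolding auts7_def by code_simp

lemma c3_7: "list_all (good 7 auts7) (search 7 [] 0 [] [] [])"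
  unfolding auts7_def by code_simp

lemma c1_8: "list_all (\<lambda>b. distinct (nbrs 8 b)) [0..<8]"
  by code_simp

lemma c2_8: "list_all (isaut 8) auts8"
  unfolding auts8_def by code_simp

lemma c3_8: "list_all (good 8 auts8) (search 8 [] 0 [] [] [])"
  unfolding auts8_def by code_simp

lemma c1_9: "list_all (\<lambda>b. distinct (nbrs 9 b)) [0..<9]"
  by code_simp

lemma c2_9: "list_all (isaut 9) auts9"
  unfolding auts9_def by code_simp

lemma c3_9: "list_all (good 9 auts9) (search 9 [] 0 [] [] [])"
  unfolding auts9_def by code_simp

lemma c1_11: "list_all (\<lambda>b. distinct (nbrs 11 b)) [0..<11]"
  by code_simp

lemma c2_11: "list_all (isaut 11) auts11"
  unfolding auts11_def by code_simp

lemma c3_11: "list_all (good 11 auts11) (search 11 [] 0 [] [] [])"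
  unfolding auts11_def by code_simp



lemma subl_complete: "mset xs \<subseteq># mset ys \<Longrightarrow> subl xs ys"
proof (induction xs arbitrary: ys)
  case Nil then show ?case by simp
next
  case (Cons x xs)
  have "x \<in># mset ys" using Cons.prems by (metis insert_subset_eq_iff mset.simps(2))
  then have xin: "x \<in> set ys" by simp
  have "mset xs \<subseteq># mset ys - {#x#}" using Cons.prems by (simp add: insert_subset_eq_iff)
  then have "mset xs \<subseteq># mset (remove1 x ys)" by simp
  then show ?case using Cons.IH xin by simp
qed

lemma lkp_in: "lkp c cs = Some s \<Longrightarrow> (c, s) \<in> set cs"
  by (induction c cs rule: lkp.induct) (auto split: if_splits)

lemma modn: "(a::nat) < n \<Longrightarrow> (a + n) mod n = a" by (simp add: mod_add_self2)

lemma nbrs_gen: "2 \<le> c \<Longrightarrow> c < n \<Longrightarrow> nbrs n c = [(c + 1) mod n, c - 1, (c + 2) mod n, c - 2]"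
proof -
  assume a: "2 \<le> c" "c < n"
  have e1: "c + n - 1 = (c - 1) + n" using a by simp
  have 1: "(c + n - 1) mod n = c - 1" unfolding e1 using a by (intro modn) simp
  have e2: "c + n - 2 = (c - 2) + n" using a by simp
  have 2: "(c + n - 2) mod n = c - 2" unfolding e2 using a by (intro modn) simp
  show ?thesis unfolding nbrs_def using 1 2 by simp
qed

lemma nbrs_0: "3 \<le> n \<Longrightarrow> nbrs n 0 = [1, n - 1, 2, n - 2]"
  unfolding nbrs_def by simp

lemma nbrs_1: "4 \<le> n \<Longrightarrow> nbrs n 1 = [2, 0, 3, n - 1]"
  unfolding nbrs_def by simp

lemma nbrs_n1: "4 \<le> n \<Longrightarrow> nbrs n (n - 1) = [0, n - 2, 1, n - 3]"
proof -
  assume a: "4 \<le> n"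
  have e1: "n - 1 + n - 1 = (n - 2) + n" using a by simp
  have 1: "(n - 1 + n - 1) mod n = n - 2" unfolding e1 using a by (intro modn) simp
  have e2: "n - 1 + n - 2 = (n - 3) + n" using a by simp
  have 2: "(n - 1 + n - 2) mod n = n - 3" unfolding e2 using a by (intro modn) simp
  have e3: "n - 1 + 2 = 1 + n" using a by simp
  have 3: "(n - 1 + 2) mod n = 1" unfolding e3 using a by (intro modn) simp
  have e4: "n - 1 + 1 = n" using a by simp
  have 4: "(n - 1 + 1) mod n = 0" unfolding e4 by simp
  show ?thesis unfolding nbrs_def using 1 2 3 4 by simp
qed

lemma nbrs_n2: "4 \<le> n \<Longrightarrow> nbrs n (n - 2) = [n - 1, n - 3, 0, n - 4]"
proof -
  assume a: "4 \<le> n"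
  have e1: "n - 2 + n - 1 = (n - 3) + n" using a by simp
  have 1: "(n - 2 + n - 1) mod n = n - 3" unfolding e1 using a by (intro modn) simp
  have e2: "n - 2 + n - 2 = (n - 4) + n" using a by simp
  have 2: "(n - 2 + n - 2) mod n = n - 4" unfolding e2 using a by (intro modn) simp
  have e3: "n - 2 + 2 = n" using a by simp
  have 3: "(n - 2 + 2) mod n = 0" unfolding e3 by simp
  have e4: "n - 2 + 1 = n - 1" using a by simp
  have 4: "(n - 2 + 1) mod n = n - 1" unfolding e4 using a by simp
  show ?thesis unfolding nbrs_def using 1 2 3 4 by simp
qed



lemma H1: "mset [b, d] \<subseteq># mset [a, b, c, d]"
  by (simp add: subset_mset.le_iff_add)
lemma H2: "mset [a, b, d] \<subseteq># mset [a, b, c, d]"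
  by (simp add: subset_mset.le_iff_add)
lemma H3: "mset [a, c] \<subseteq># mset [a, b, c, d]"
  by (simp add: subset_mset.le_iff_add)
lemma H4: "mset [b, a, c] \<subseteq># mset [a, b, c, d]"
  by (simp add: subset_mset.le_iff_add)

lemma rev_map_upt4: "rev (map f [0..<Suc (Suc (Suc (Suc m)))]) = f (m + 3) # f (m + 2) # f (m + 1) # f m # rev (map f [0..<m])"
  by (simp add: numeral_eq_Suc)

context
  fixes n :: nat and f :: "nat \<Rightarrow> nat"
  assumes n4: "4 \<le> n"
    and bal: "\<And>a b. a < n \<Longrightarrow> b < n \<Longrightarrow> f a = f b \<Longrightarrow> mset (map f (nbrs n a)) = mset (map f (nbrs n b))"
    and mr: "\<And>i. i < n \<Longrightarrow> f i = i \<or> f i \<in> f ` {..<i}"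
begin

definition Inv :: "(nat \<times> nat list) list \<Rightarrow> bool" where
  "Inv cs = (\<forall>(col, s) \<in> set cs. \<exists>c<n. f c = col \<and> mset s = mset (map f (nbrs n c)))"

lemma okp_sound:
  assumes "Inv cs" "x < n" "mset t \<subseteq># mset (map f (nbrs n x))"
  shows "okp (f x) t cs"
proof (cases "lkp (f x) cs")
  case None then show ?thesis by (simp add: okp_def)
next
  case (Some s)
  then have "(f x, s) \<in> set cs" by (rule lkp_in)
  then obtain c where c: "c < n" "f c = f x" "mset s = mset (map f (nbrs n c))"
    using assms(1) unfolding Inv_def by fastforce
  then have "mset s = mset (map f (nbrs n x))" using bal[of c x] assms(2) by simp
  then have "subl t s" using assms(3) by (intro subl_complete) simp
  then show ?thesis using Some by (simp add: okp_def)
qed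

lemma addc_sound:
  assumes "Inv cs" "x < n" "mset t = mset (map f (nbrs n x))"
  shows "\<exists>cs'. addc (f x) t cs = Some cs' \<and> Inv cs'"
proof (cases "lkp (f x) cs")
  case None
  then show ?thesis using assms unfolding addc_def Inv_def by auto
next
  case (Some s)
  then have "(f x, s) \<in> set cs" by (rule lkp_in)
  then obtain c where c: "c < n" "f c = f x" "mset s = mset (map f (nbrs n c))"
    using assms(1) unfolding Inv_def by fastforce
  then have "mset s = mset (map f (nbrs n x))" using bal[of c x] assms(2) by simp
  then have "subl t s" using assms(3) by (intro subl_complete) simp
  then show ?thesis using Some assms(1) by (simp add: addc_def)
qed

lemma upd_sound:
  assumes "Inv cs" "k < n"
  shows "\<exists>cs'. upd (rev (map f [0..<Suc k])) cs = Some cs' \<and> Inv cs'"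
proof (cases "k < 4")
  case True
  then have "k = 0 \<or> k = 1 \<or> k = 2 \<or> k = 3" by auto
  then show ?thesis using assms(1) by (auto simp: numeral_eq_Suc)
next
  case False
  then obtain m where "k = 4 + m" using le_Suc_ex[of 4 k] by auto
  then have m: "k = Suc (Suc (Suc (Suc m)))" by simp
  have nb: "nbrs n (m + 2) = [m + 3, m + 1, m + 4, m]"
    using nbrs_gen[of "m + 2" n] assms(2) m by simp
  have "rev (map f [0..<Suc k]) = f (m + 4) # f (m + 3) # f (m + 2) # f (m + 1) # f m # rev (map f [0..<m])"
    using m by (simp add: numeral_eq_Suc)
  moreover have "\<exists>cs'. addc (f (m + 2)) [f (m + 3), f (m + 1), f (m + 4), f m] cs = Some cs' \<and> Inv cs'"
    using addc_sound[OF assms(1), of "m + 2"] nb assms(2) m by simp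
  ultimately show ?thesis by simp
qed


lemma pchk_sound:
  assumes "Inv cs" "k \<le> n" "4 \<le> k \<longrightarrow> h = map f [0..<4]"
  shows "pchk (rev (map f [0..<k])) cs h"
proof (cases "k < 4")
  case True
  then have "k = 0 \<or> k = 1 \<or> k = 2 \<or> k = 3" by auto
  then show ?thesis by (auto simp: numeral_eq_Suc)
next
  case False
  then obtain m where "k = 4 + m" using le_Suc_ex[of 4 k] by auto
  then have m: "k = Suc (Suc (Suc (Suc m)))" by simp
  have h: "h = [f 0, f 1, f 2, f 3]" using assms(3) m by (simp add: numeral_eq_Suc)
  have nb3: "nbrs n (m + 3) = [(m + 3 + 1) mod n, m + 3 - 1, (m + 3 + 2) mod n, m + 3 - 2]"
    by (rule nbrs_gen) (use assms(2) m in simp_all)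
  have nb2: "nbrs n (m + 2) = [(m + 2 + 1) mod n, m + 2 - 1, (m + 2 + 2) mod n, m + 2 - 2]"
    by (rule nbrs_gen) (use assms(2) m in simp_all)
  have "m + 2 + 1 < n" using assms(2) m by simp
  then have nb2': "nbrs n (m + 2) = [m + 3, m + 1, (m + 4) mod n, m]" using nb2
    by (simp add: numeral_eq_Suc)
  have s1: "mset [f (m + 2), f (m + 1)] \<subseteq># mset (map f (nbrs n (m + 3)))"
    unfolding nb3 by (simp add: subset_mset.le_iff_add numeral_eq_Suc)
  have s2: "mset [f (m + 3), f (m + 1), f m] \<subseteq># mset (map f (nbrs n (m + 2)))"
    unfolding nb2' by (simp add: subset_mset.le_iff_add numeral_eq_Suc)
  have s3: "mset [f 1, f 2] \<subseteq># mset (map f (nbrs n 0))"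
    using nbrs_0[of n] n4 by (simp add: subset_mset.le_iff_add)
  have s4: "mset [f 0, f 2, f 3] \<subseteq># mset (map f (nbrs n 1))"
    using nbrs_1[OF n4] by (simp add: subset_mset.le_iff_add)
  have o1: "okp (f (m + 3)) [f (m + 2), f (m + 1)] cs"
    using okp_sound[OF assms(1) _ s1] assms(2) m by simp
  have o2: "okp (f (m + 2)) [f (m + 3), f (m + 1), f m] cs"
    using okp_sound[OF assms(1) _ s2] assms(2) m by simp
  have o3: "okp (f 0) [f 1, f 2] cs"
    using okp_sound[OF assms(1) _ s3] n4 by simp
  have o4: "okp (f 1) [f 0, f 2, f 3] cs"
    using okp_sound[OF assms(1) _ s4] n4 by simp
  have "rev (map f [0..<k]) = f (m + 3) # f (m + 2) # f (m + 1) # f m # rev (map f [0..<m])"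
    using m rev_map_upt4 by simp
  then show ?thesis using o1 o2 o3 o4 h by simp
qed

lemma final_sound:
  assumes "Inv cs" "h = map f [0..<4]"
  shows "map f [0..<n] \<in> set (final (rev (map f [0..<n])) cs h)"
proof -
  obtain m where "n = 4 + m" using le_Suc_ex[OF n4] by auto
  then have m: "n = Suc (Suc (Suc (Suc m)))" by simp
  have h: "h = [f 0, f 1, f 2, f 3]" using assms(2) by (simp add: numeral_eq_Suc)
  have rv: "rev (map f [0..<n]) = f (n - 1) # f (n - 2) # f (n - 3) # f (n - 4) # rev (map f [0..<m])"
    using m rev_map_upt4[of f m] by (simp add: numeral_eq_Suc)
  obtain cs1 where c1: "addc (f (n - 2)) [f (n - 1), f (n - 3), f 0, f (n - 4)] cs = Some cs1" "Inv cs1"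
    using addc_sound[OF assms(1), of "n - 2" "[f (n - 1), f (n - 3), f 0, f (n - 4)]"] nbrs_n2[OF n4] n4 by auto
  obtain cs2 where c2: "addc (f (n - 1)) [f 0, f (n - 2), f 1, f (n - 3)] cs1 = Some cs2" "Inv cs2"
    using addc_sound[OF c1(2), of "n - 1" "[f 0, f (n - 2), f 1, f (n - 3)]"] nbrs_n1[OF n4] n4 by auto
  obtain cs3 where c3: "addc (f 0) [f 1, f (n - 1), f 2, f (n - 2)] cs2 = Some cs3" "Inv cs3"
    using addc_sound[OF c2(2), of 0 "[f 1, f (n - 1), f 2, f (n - 2)]"] nbrs_0[of n] n4 by auto
  obtain cs4 where c4: "addc (f 1) [f 2, f 0, f 3, f (n - 1)] cs3 = Some cs4" "Inv cs4"
    using addc_sound[OF c3(2), of 1 "[f 2, f 0, f 3, f (n - 1)]"] nbrs_1[of n] n4 by auto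
  show ?thesis unfolding rv h using c1 c2 c3 c4 rv by simp
qed

lemma search_complete:
  "N = n \<longrightarrow> k \<le> n \<longrightarrow> ys = rev (map f [0..<k]) \<longrightarrow> set reps = f ` {..<k} \<longrightarrow> Inv cs \<longrightarrow>
     (4 \<le> k \<longrightarrow> h = map f [0..<4]) \<longrightarrow> map f [0..<n] \<in> set (search N reps k ys cs h)"
  "N = n \<longrightarrow> k < n \<longrightarrow> ys = rev (map f [0..<k]) \<longrightarrow> set reps = f ` {..<k} \<longrightarrow> Inv cs \<longrightarrow>
     (4 \<le> k \<longrightarrow> h = map f [0..<4]) \<longrightarrow> f k \<in> set vs \<longrightarrow> map f [0..<n] \<in> set (branch N reps k ys cs h vs)"
  "N = n \<longrightarrow> k \<le> n \<longrightarrow> ys = rev (map f [0..<k]) \<longrightarrow> set reps = f ` {..<k} \<longrightarrow> (\<exists>cs. co = Some cs \<and> Inv cs) \<longrightarrow>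
     (4 \<le> k \<longrightarrow> h = map f [0..<4]) \<longrightarrow> map f [0..<n] \<in> set (step N reps k ys co h)"
proof (induction N reps k ys cs h and N reps k ys cs h vs and N reps k ys co h rule: search_branch_step.induct)
  case (1 N reps k ys cs h)
  show ?case
  proof (intro impI)
    assume a: "N = n" "k \<le> n" "ys = rev (map f [0..<k])" "set reps = f ` {..<k}" "Inv cs"
      "4 \<le> k \<longrightarrow> h = map f [0..<4]"
    show "map f [0..<n] \<in> set (search N reps k ys cs h)"
    proof (cases "n \<le> k")
      case True
      then have "k = n" using a by simp
      then show ?thesis using a final_sound[of cs h] n4 by simp
    next
      case False
      have "f k \<in> set (reps @ [k])" using mr[of k] False a(4) by auto
      then have "map f [0..<n] \<in> set (branch N reps k ys cs h (reps @ [k]))"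
        using "1.IH" a False by simp
      then show ?thesis using a False by simp
    qed
  qed
next
  case (2 N reps k ys cs h)
  then show ?case by simp
next
  case (3 N reps k ys cs h v vs)
  show ?case
  proof (intro impI)
    assume a: "N = n" "k < n" "ys = rev (map f [0..<k])" "set reps = f ` {..<k}" "Inv cs"
      "4 \<le> k \<longrightarrow> h = map f [0..<4]" "f k \<in> set (v # vs)"
    have eq: "branch N reps k ys cs h (v # vs) =
      step N (if v = k then reps @ [v] else reps) (Suc k) (v # ys) (upd (v # ys) cs) (if k = 3 then rev (v # ys) else h)
      @ branch N reps k ys cs h vs" using a(1,2) by simp
    show "map f [0..<n] \<in> set (branch N reps k ys cs h (v # vs))"
    proof (cases "v = f k")
      case True
      have ys': "v # ys = rev (map f [0..<Suc k])" using a True by simp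
      have reps': "set (if v = k then reps @ [v] else reps) = f ` {..<Suc k}"
      proof (cases "v = k")
        case True
        then show ?thesis using a(4) \<open>v = f k\<close> by (auto simp: lessThan_Suc)
      next
        case False
        then have "f k \<in> f ` {..<k}" using mr[of k] a(2) \<open>v = f k\<close> by auto
        then show ?thesis using a(4) False by (auto simp: lessThan_Suc)
      qed
      have h': "4 \<le> Suc k \<longrightarrow> (if k = 3 then rev (v # ys) else h) = map f [0..<4]"
        using a(6) ys' by (auto simp: numeral_eq_Suc)
      obtain cs' where cs': "upd (v # ys) cs = Some cs'" "Inv cs'"
        using upd_sound[OF a(5) a(2)] ys' by auto
      have "map f [0..<n] \<in> set (step N (if v = k then reps @ [v] else reps) (Suc k) (v # ys)
              (upd (v # ys) cs) (if k = 3 then rev (v # ys) else h))"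
        using "3.IH"(1) a ys' reps' h' cs' by auto
      then show ?thesis unfolding eq by simp
    next
      case False
      then have "f k \<in> set vs" using a(7) by simp
      then have "map f [0..<n] \<in> set (branch N reps k ys cs h vs)"
        using "3.IH"(2) a by simp
      then show ?thesis unfolding eq by simp
    qed
  qed
next
  case (4 N reps k ys h)
  then show ?case by simp
next
  case (5 N reps k ys cs h)
  show ?case
  proof (intro impI)
    assume a: "N = n" "k \<le> n" "ys = rev (map f [0..<k])" "set reps = f ` {..<k}"
      "\<exists>cs'. Some cs = Some cs' \<and> Inv cs'" "4 \<le> k \<longrightarrow> h = map f [0..<4]"
    have i: "Inv cs" using a(5) by simp
    have p: "pchk ys cs h" using pchk_sound[OF i a(2) a(6)] a(3) by simp
    have "map f [0..<n] \<in> set (search N reps k ys cs h)" using "5.IH" p a i by simp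
    then show "map f [0..<n] \<in> set (step N reps k ys (Some cs) h)" using p by simp
  qed
qed

lemma search_complete0: "map f [0..<n] \<in> set (search n [] 0 [] [] [])"
  using search_complete(1)[of n 0 "[]" "[]" "[]" "[]"] by (simp add: Inv_def)

end



lemma edges_iff: "0 < n \<Longrightarrow> (a, b) \<in> ring_edges n \<longleftrightarrow> b < n \<and> a \<in> set (nbrs n b)"
  unfolding ring_edges_def nbrs_def by auto

lemma nbrs_lt: "0 < n \<Longrightarrow> x \<in> set (nbrs n b) \<Longrightarrow> x < n"
  unfolding nbrs_def by auto

lemma nbrs_len: "length (nbrs n b) = 4"
  unfolding nbrs_def by simp

lemma input_eq: "0 < n \<Longrightarrow> c < n \<Longrightarrow> input_set (ring_edges n) c = (\<lambda>j. (j, c)) ` set (nbrs n c)"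
  unfolding input_set_def using edges_iff[of n] by force

lemma bij_mset:
  assumes "bij_betw \<beta> A B" "finite A" "\<And>e. e \<in> A \<Longrightarrow> g (\<beta> e) = g e"
  shows "image_mset g (mset_set B) = image_mset g (mset_set A)"
proof -
  have B: "B = \<beta> ` A" and inj: "inj_on \<beta> A" using assms(1) by (auto simp: bij_betw_def)
  have "mset_set B = image_mset \<beta> (mset_set A)" unfolding B using image_mset_mset_set[OF inj] by simp
  then have "image_mset g (mset_set B) = image_mset (g \<circ> \<beta>) (mset_set A)" by (simp add: multiset.map_comp)
  also have "\<dots> = image_mset g (mset_set A)"
    using assms(2,3) by (intro image_mset_cong) simp
  finally show ?thesis .
qed

lemma sig_eq:
  assumes "0 < n" "c < n" "distinct (nbrs n c)"
  shows "image_mset (f \<circ> tail) (mset_set (input_set (ring_edges n) c)) = mset (map f (nbrs n c))"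
proof -
  have inj: "inj_on (\<lambda>j. (j, c)) (set (nbrs n c))" by (auto simp: inj_on_def)
  have "mset_set (input_set (ring_edges n) c) = image_mset (\<lambda>j. (j, c)) (mset (nbrs n c))"
    unfolding input_eq[OF assms(1,2)] image_mset_mset_set[OF inj, symmetric] mset_set_set[OF assms(3)] ..
  then show ?thesis by (simp add: multiset.map_comp tail_def o_def)
qed

definition gam :: "nat \<Rightarrow> nat list \<Rightarrow> nat \<Rightarrow> nat" where
  "gam n g = (\<lambda>k. if k < n then g ! k else k)"

lemma isaut_set:
  assumes "isaut n g"
  shows "set g = {..<n}" "inj_on (nth g) {..<n}" "\<And>k. k < n \<Longrightarrow> g ! k < n"
proof -
  have l: "length g = n" and d: "distinct g" and lt: "\<forall>x\<in>set g. x < n"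
    using assms unfolding isaut_def by (auto simp: list_all_iff)
  have "set g \<subseteq> {..<n}" using lt by auto
  moreover have "card (set g) = card {..<n}" using d l by (simp add: distinct_card)
  ultimately show s: "set g = {..<n}" by (intro card_subset_eq) auto
  show "inj_on (nth g) {..<n}" using bij_betw_nth[OF d, of "{..<n}" "set g"] l
    by (auto simp: bij_betw_def)
  show "\<And>k. k < n \<Longrightarrow> g ! k < n" using s l by (metis lessThan_iff nth_mem)
qed

lemma aut_of:
  assumes n0: "0 < n" and c1: "\<And>b. b < n \<Longrightarrow> distinct (nbrs n b)" and ia: "isaut n g"
  shows "gam n g \<in> automorphisms (ring_cells n) (ring_edges n)"
proof -
  have l: "length g = n" and d: "distinct g"
    using ia unfolding isaut_def by auto
  have chk: "\<And>b a. b < n \<Longrightarrow> a \<in> set (nbrs n b) \<Longrightarrow> g ! a \<in> set (nbrs n (g ! b))"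
    using ia unfolding isaut_def by (auto simp: list_all_iff)
  note s = isaut_set[OF ia]
  have C: "ring_cells n = {..<n}" unfolding ring_cells_def by auto
  have bn: "bij_betw (nth g) {..<n} {..<n}" using bij_betw_nth[OF d, of "{..<n}" "set g"] l s(1) by simp
  have "bij_betw (gam n g) {..<n} {..<n}"
    using bn by (rule bij_betw_cong[THEN iffD1, rotated]) (simp add: gam_def)
  then have perm: "gam n g permutes ring_cells n" unfolding C
    by (rule bij_imp_permutes) (simp add: gam_def)
  have edge: "(c, d) \<in> ring_edges n \<longleftrightarrow> (gam n g c, gam n g d) \<in> ring_edges n"
    if c: "c \<in> ring_cells n" and dd: "d \<in> ring_cells n" for c d
  proof -
    have cn: "c < n" and dn: "d < n" using c dd C by auto
    have gd: "g ! d < n" using s(3) dn .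
    have sub: "nth g ` set (nbrs n d) \<subseteq> set (nbrs n (g ! d))" using chk dn by auto
    have inj4: "inj_on (nth g) (set (nbrs n d))"
      using s(2) by (rule inj_on_subset) (auto intro: nbrs_lt[OF n0])
    have "card (nth g ` set (nbrs n d)) = 4"
      using card_image[OF inj4] distinct_card[OF c1[OF dn]] nbrs_len by simp
    moreover have "card (set (nbrs n (g ! d))) = 4"
      using distinct_card[OF c1[OF gd]] nbrs_len by simp
    ultimately have eqs: "nth g ` set (nbrs n d) = set (nbrs n (g ! d))"
      using sub by (intro card_subset_eq) auto
    have "c \<in> set (nbrs n d) \<longleftrightarrow> g ! c \<in> set (nbrs n (g ! d))"
    proof
      assume "c \<in> set (nbrs n d)" then show "g ! c \<in> set (nbrs n (g ! d))" using chk dn by auto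
    next
      assume "g ! c \<in> set (nbrs n (g ! d))"
      then obtain a where a: "a \<in> set (nbrs n d)" "g ! a = g ! c" using eqs by (metis imageE)
      have "a < n" using a(1) nbrs_lt[OF n0] by auto
      then have "a = c" using a(2) s(2) cn by (auto dest: inj_onD)
      then show "c \<in> set (nbrs n d)" using a(1) by simp
    qed
    then show ?thesis using edges_iff[OF n0] cn dn gd by (simp add: gam_def)
  qed
  show ?thesis unfolding automorphisms_def using perm edge by blast
qed

lemma main_generic:
  assumes n4: "4 \<le> n"
    and c1: "list_all (\<lambda>b. distinct (nbrs n b)) [0..<n]"
    and c2: "list_all (isaut n) A"
    and c3: "list_all (good n A) (search n [] 0 [] [] [])"
    and B: "balanced (ring_cells n) (ring_edges n) R"
  shows "\<exists>\<Sigma>. is_subgroup_Aut (ring_cells n) (ring_edges n) \<Sigma> \<and> R = orbit_rel (ring_cells n) \<Sigma>"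
proof -
  define C where "C = ring_cells n"
  define E where "E = ring_edges n"
  have n0: "0 < n" using n4 by simp
  have C: "C = {..<n}" unfolding C_def ring_cells_def by auto
  have c1': "\<And>b. b < n \<Longrightarrow> distinct (nbrs n b)" using c1 by (auto simp: list_all_iff)
  have eq: "equiv C R" using B unfolding balanced_def C_def by simp
  have Rsub: "R \<subseteq> C \<times> C" and refl: "\<And>x. x \<in> C \<Longrightarrow> (x, x) \<in> R"
    and sym: "\<And>x y. (x, y) \<in> R \<Longrightarrow> (y, x) \<in> R"
    and tr: "\<And>x y z. (x, y) \<in> R \<Longrightarrow> (y, z) \<in> R \<Longrightarrow> (x, z) \<in> R"
    using eq unfolding equiv_def refl_on_def sym_def trans_def by blast+
  define f where "f i = (LEAST j. (j, i) \<in> R)" for i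
  have f1: "(f i, i) \<in> R \<and> f i \<le> i" if "i < n" for i
  proof -
    have "(i, i) \<in> R" using refl C that by simp
    then show ?thesis unfolding f_def by (metis LeastI Least_le)
  qed
  have f2: "(i, j) \<in> R \<longleftrightarrow> f i = f j" if "i < n" "j < n" for i j
  proof
    assume ij: "(i, j) \<in> R"
    have "\<And>x. (x, i) \<in> R \<longleftrightarrow> (x, j) \<in> R" using ij sym tr by blast
    then show "f i = f j" unfolding f_def by simp
  next
    assume "f i = f j"
    then have "(i, f j) \<in> R" using f1[OF that(1)] sym by simp
    then show "(i, j) \<in> R" using f1[OF that(2)] tr by blast
  qed
  have fn: "f i < n" if "i < n" for i using f1[OF that] that by simp
  have mr: "f i = i \<or> f i \<in> f ` {..<i}" if i: "i < n" for i
  proof (cases "f i = i")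
    case False
    then have lt: "f i < i" using f1[OF i] by simp
    have "f (f i) = f i" using f2[of "f i" i] f1[OF i] fn[OF i] i by simp
    then have "f i \<in> f ` {..<i}" using lt by (metis image_eqI lessThan_iff)
    then show ?thesis by simp
  qed simp
  have bal: "mset (map f (nbrs n a)) = mset (map f (nbrs n b))"
    if a: "a < n" and b: "b < n" and fab: "f a = f b" for a b
  proof -
    have "(a, b) \<in> R" using f2 a b fab by simp
    then obtain \<beta> where bij: "bij_betw \<beta> (input_set E a) (input_set E b)"
      and tl: "\<forall>e \<in> input_set E a. (tail e, tail (\<beta> e)) \<in> R"
      using B unfolding balanced_def E_def by blast
    have fin: "finite (input_set E a)" unfolding E_def input_eq[OF n0 a] by simp
    have "image_mset (f \<circ> tail) (mset_set (input_set E b)) = image_mset (f \<circ> tail) (mset_set (input_set E a))"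
    proof (rule bij_mset[OF bij fin])
      fix e assume e: "e \<in> input_set E a"
      then have r: "(tail e, tail (\<beta> e)) \<in> R" using tl by blast
      then have "tail e < n" "tail (\<beta> e) < n" using Rsub C by auto
      then show "(f \<circ> tail) (\<beta> e) = (f \<circ> tail) e" using f2 r by simp
    qed
    then show ?thesis unfolding E_def using sig_eq[OF n0 a c1'[OF a], where f=f] sig_eq[OF n0 b c1'[OF b], where f=f] by simp
  qed
  have "map f [0..<n] \<in> set (search n [] 0 [] [] [])"
    by (rule search_complete0[OF n4 bal mr])
  then have gd: "good n A (map f [0..<n])" using c3 by (simp add: list_all_iff)
  have ia: "\<And>g. g \<in> set A \<Longrightarrow> isaut n g" using c2 by (simp add: list_all_iff)
  have wit: "\<exists>g\<in>set A. g ! (f j) = j \<and> (\<forall>k<n. f (g ! k) = f k)" if j: "j < n" for j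
  proof -
    have "\<forall>j\<in>{0..<n}. \<exists>g\<in>set A. g ! f j = j \<and> (\<forall>k\<in>{0..<n}. map f [0..<n] ! (g ! k) = f k)"
      using gd unfolding good_def by (simp add: list_all_iff list_ex_iff)
    moreover have "j \<in> {0..<n}" using j by simp
    ultimately obtain g where g: "g \<in> set A" "g ! f j = j" "\<forall>k\<in>{0..<n}. map f [0..<n] ! (g ! k) = f k"
      by blast
    have "\<forall>k<n. f (g ! k) = f k" using g(3) isaut_set(3)[OF ia[OF g(1)]] by auto
    then show ?thesis using g(1,2) by auto
  qed
  define \<Sigma> where "\<Sigma> = {\<gamma> \<in> automorphisms C E. \<forall>c\<in>C. (c, \<gamma> c) \<in> R}"
  have sub: "is_subgroup_Aut C E \<Sigma>"
    unfolding is_subgroup_Aut_def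
  proof (intro conjI ballI)
    show "\<Sigma> \<subseteq> automorphisms C E" unfolding \<Sigma>_def by auto
    show "id \<in> \<Sigma>" unfolding \<Sigma>_def automorphisms_def using refl by (auto intro: permutes_id)
  next
    fix \<gamma> \<delta> assume g: "\<gamma> \<in> \<Sigma>" and d: "\<delta> \<in> \<Sigma>"
    have gp: "\<gamma> permutes C" and ge: "\<forall>c\<in>C. \<forall>d\<in>C. (c, d) \<in> E \<longleftrightarrow> (\<gamma> c, \<gamma> d) \<in> E"
      and gr: "\<forall>c\<in>C. (c, \<gamma> c) \<in> R" using g unfolding \<Sigma>_def automorphisms_def by auto
    have dp: "\<delta> permutes C" and de: "\<forall>c\<in>C. \<forall>d\<in>C. (c, d) \<in> E \<longleftrightarrow> (\<delta> c, \<delta> d) \<in> E"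
      and dr: "\<forall>c\<in>C. (c, \<delta> c) \<in> R" using d unfolding \<Sigma>_def automorphisms_def by auto
    have dC: "\<And>x. x \<in> C \<Longrightarrow> \<delta> x \<in> C" using dp by (simp add: permutes_in_image)
    show "\<gamma> \<circ> \<delta> \<in> \<Sigma>" unfolding \<Sigma>_def automorphisms_def
    proof (intro CollectI conjI ballI)
      show "\<gamma> \<circ> \<delta> permutes C" by (rule permutes_compose[OF dp gp])
    next
      fix c d assume cd: "c \<in> C" "d \<in> C"
      have e1: "(c, d) \<in> E \<longleftrightarrow> (\<delta> c, \<delta> d) \<in> E" using de cd by blast
      have e2: "(\<delta> c, \<delta> d) \<in> E \<longleftrightarrow> (\<gamma> (\<delta> c), \<gamma> (\<delta> d)) \<in> E" using ge dC cd by blast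
      show "(c, d) \<in> E \<longleftrightarrow> ((\<gamma> \<circ> \<delta>) c, (\<gamma> \<circ> \<delta>) d) \<in> E" using e1 e2 by simp
    next
      fix c assume c: "c \<in> C"
      then show "(c, (\<gamma> \<circ> \<delta>) c) \<in> R" using dr gr dC tr by (metis comp_apply)
    qed
  next
    fix \<gamma> assume g: "\<gamma> \<in> \<Sigma>"
    have gp: "\<gamma> permutes C" and ge: "\<forall>c\<in>C. \<forall>d\<in>C. (c, d) \<in> E \<longleftrightarrow> (\<gamma> c, \<gamma> d) \<in> E"
      and gr: "\<forall>c\<in>C. (c, \<gamma> c) \<in> R" using g unfolding \<Sigma>_def automorphisms_def by auto
    have ip: "inv \<gamma> permutes C" by (rule permutes_inv[OF gp])
    have iC: "\<And>x. x \<in> C \<Longrightarrow> inv \<gamma> x \<in> C" using ip by (simp add: permutes_in_image)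
    have gi: "\<And>x. \<gamma> (inv \<gamma> x) = x" using permutes_inverses(1)[OF gp] .
    show "inv \<gamma> \<in> \<Sigma>" unfolding \<Sigma>_def automorphisms_def
    proof (intro CollectI conjI ballI)
      show "inv \<gamma> permutes C" by (rule ip)
    next
      fix c d assume "c \<in> C" "d \<in> C"
      then show "(c, d) \<in> E \<longleftrightarrow> (inv \<gamma> c, inv \<gamma> d) \<in> E" using ge iC gi by metis
    next
      fix c assume c: "c \<in> C"
      have "(inv \<gamma> c, \<gamma> (inv \<gamma> c)) \<in> R" using gr iC c by blast
      then show "(c, inv \<gamma> c) \<in> R" using gi sym by metis
    qed
  qed
  have gamS: "gam n g \<in> \<Sigma>" if g: "g \<in> set A" "\<forall>k<n. f (g ! k) = f k" for g
  proof -
    have "gam n g \<in> automorphisms C E" unfolding C_def E_def using aut_of[OF n0 c1' ia[OF g(1)]] .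
    moreover have "(c, gam n g c) \<in> R" if c: "c \<in> C" for c
    proof -
      have cn: "c < n" using c C by simp
      have "g ! c < n" using isaut_set(3)[OF ia[OF g(1)] cn] .
      then show ?thesis using f2[of c "g ! c"] cn g(2) by (simp add: gam_def)
    qed
    ultimately show ?thesis unfolding \<Sigma>_def by blast
  qed
  have "R = orbit_rel C \<Sigma>"
  proof
    show "R \<subseteq> orbit_rel C \<Sigma>"
    proof
      fix p assume p: "p \<in> R"
      obtain c d where pcd: "p = (c, d)" by (cases p)
      have cd: "c < n" "d < n" using p pcd Rsub C by auto
      have fcd: "f c = f d" using f2 cd p pcd by simp
      obtain g1 where g1: "g1 \<in> set A" "g1 ! (f c) = c" "\<forall>k<n. f (g1 ! k) = f k" using wit[OF cd(1)] by blast
      obtain g2 where g2: "g2 \<in> set A" "g2 ! (f d) = d" "\<forall>k<n. f (g2 ! k) = f k" using wit[OF cd(2)] by blast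
      have s1: "gam n g1 \<in> \<Sigma>" using gamS g1(1,3) by blast
      have s2: "gam n g2 \<in> \<Sigma>" using gamS g2(1,3) by blast
      have s: "gam n g2 \<circ> inv (gam n g1) \<in> \<Sigma>" using sub s1 s2 unfolding is_subgroup_Aut_def by blast
      have p1: "gam n g1 permutes C" using s1 unfolding \<Sigma>_def automorphisms_def by simp
      have fc: "f c < n" using fn cd by simp
      have "gam n g1 (f c) = c" using g1(2) fc by (simp add: gam_def)
      then have "inv (gam n g1) c = f c" using permutes_inverses(2)[OF p1, of "f c"] by simp
      then have "(gam n g2 \<circ> inv (gam n g1)) c = d" using g2(2) fcd fc by (simp add: gam_def)
      then have "\<exists>\<gamma>\<in>\<Sigma>. \<gamma> c = d" using s by blast
      then show "p \<in> orbit_rel C \<Sigma>" unfolding orbit_rel_def pcd using cd C by simp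
    qed
    show "orbit_rel C \<Sigma> \<subseteq> R"
      unfolding orbit_rel_def \<Sigma>_def by auto
  qed
  then show ?thesis using sub unfolding C_def E_def by blast
qed


theorem proposition3p3:
  fixes n :: nat and R :: "(nat \<times> nat) set"
  assumes "n \<in> {5, 6, 7, 8, 9, 11}"
    and "balanced (ring_cells n) (ring_edges n) R"
  shows "\<exists>\<Sigma>. is_subgroup_Aut (ring_cells n) (ring_edges n) \<Sigma> \<and>
              R = orbit_rel (ring_cells n) \<Sigma>"
proof -
  consider "n = 5" | "n = 6" | "n = 7" | "n = 8" | "n = 9" | "n = 11" using assms(1) by auto
  then show ?thesis
  proof cases
    case 1 then show ?thesis using main_generic[OF _ c1_5 c2_5 c3_5, of R] assms(2) by simp
  next
    case 2 then show ?thesis using main_generic[OF _ c1_6 c2_6 c3_6, of R] assms(2) by simp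
  next
    case 3 then show ?thesis using main_generic[OF _ c1_7 c2_7 c3_7, of R] assms(2) by simp
  next
    case 4 then show ?thesis using main_generic[OF _ c1_8 c2_8 c3_8, of R] assms(2) by simp
  next
    case 5 then show ?thesis using main_generic[OF _ c1_9 c2_9 c3_9, of R] assms(2) by simp
  next
    case 6 then show ?thesis using main_generic[OF _ c1_11 c2_11 c3_11, of R] assms(2) by simp
  qed
qed

end
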